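(* Under the setting and assumptions of the AIRC closed loop (with $A$ Metzler and Hurwitz, $g_1\neq0$, all parameters positive), let $(z_1^*(\eta),z_2^*(\eta))$ denote the controller components of the unique equilibrium with $z_1^*>0$, i.e. $z_1^*(\eta)$ is the unique positive root of $P_1(z)=\eta g_1k_iz^2+(g_0-r)\eta z-g_nk_p\mu r$ and $z_2^*=\mu/(\eta z_1^* )$. Then, as $\eta\to\infty$: (1) if $r>g_0$, then $(z_1^*,z_2^* )\to\big((r-g_0)/(g_1k_i),\,0\big)$; (2) if $r<g_0$, then $(z_1^*,z_2^* )\to\big(0,\,(g_0-r)/(g_nrk_p)\big)$; (3) if $r=g_0$, then for every $\eta>0$, $z_1^*=\sqrt{\dfrac{g_nk_p\mu r}{\eta g_1k_i}}$ and $z_2^*=\sqrt{\dfrac{\theta g_1k_i}{\eta g_nk_p}}$; in particular both tend to $0$ while $\eta z_1^*z_2^*=\mu$ for all $\eta$.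
   Context: Setting: $A\in\mathbb{R}^{n\times n}$ Metzler (nonnegative off-diagonal entries) and Hurwitz stable (all eigenvalues with negative real part), $b_0\in\mathbb{R}^n_{\ge0}$, $\mu,\theta,k_i,k_p,\eta>0$, $r:=\mu/\theta$, $g_1:=-e_n^TA^{-1}e_1$, $g_n:=-e_n^TA^{-1}e_n$, $g_0:=-e_n^TA^{-1}b_0$, with $g_1\ne0$. The closed-loop system is $\dot x=Ax+k_iz_1e_1-k_px_nz_2e_n+b_0$, $\dot z_1=\mu-\eta z_1z_2$, $\dot z_2=\theta x_n-\eta z_1z_2$, and $e_i$ denotes the $i$-th standard basis vector. *)

theory Defs
  imports "HOL-Analysis.Analysis"
begin

text \<open>Indices 1 and n of the state space: the least and the greatest index
of the finite linearly ordered index type.\<close>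
definition first_idx :: "'n::{finite,linorder}" where
  "first_idx = Min UNIV"

definition last_idx :: "'n::{finite,linorder}" where
  "last_idx = Max UNIV"

definition metzler :: "real^'n^'n \<Rightarrow> bool" where
  "metzler A \<longleftrightarrow> (\<forall>i j. i \<noteq> j \<longrightarrow> 0 \<le> A $ i $ j)"

definition complexify :: "real^'n^'m \<Rightarrow> complex^'n^'m" where
  "complexify A = (\<chi> i j. complex_of_real (A $ i $ j))"

definition hurwitz :: "real^'n^'n \<Rightarrow> bool" where
  "hurwitz A \<longleftrightarrow> (\<forall>c::complex. (\<exists>v::complex^'n. v \<noteq> 0 \<and> complexify A *v v = c *s v) \<longrightarrow> Re c < 0)"

definition gcoef :: "((real, 'a::{finite,linorder}) vec, 'a) vec \<Rightarrow> (real, 'a) vec \<Rightarrow> real" where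
  "gcoef A v = - ((matrix_inv A *v v) $ last_idx)"

definition airc_z1 :: "real \<Rightarrow> real \<Rightarrow> real \<Rightarrow> real \<Rightarrow> real \<Rightarrow> real \<Rightarrow> real \<Rightarrow> real \<Rightarrow> real" where
  "airc_z1 g0 g1 gn ki kp mu r eta =
     (THE z. 0 < z \<and> eta * g1 * ki * z^2 + (g0 - r) * eta * z - gn * kp * mu * r = 0)"

end

theory Submission
  imports Defs
begin

lemma quad_root:
  fixes g0 g1 gn ki kp mu r eta :: real
  assumes a: "g1*ki > 0" and c: "gn*kp*mu*r > 0" and e: "eta > 0"
  shows "airc_z1 g0 g1 gn ki kp mu r eta
     = ((r-g0) + sqrt((r-g0)^2 + 4*(g1*ki)*(gn*kp*mu*r)/eta))/(2*(g1*ki))"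
proof -
  define A where "A = g1*ki"
  define C where "C = gn*kp*mu*r"
  define d where "d = r - g0"
  define q where "q = sqrt(d^2 + 4*A*C/eta)"
  have A: "A>0" and C: "C>0" using a c by (auto simp: A_def C_def)
  have pos: "0 \<le> d^2 + 4*A*C/eta" using A C e by (intro add_nonneg_nonneg) auto
  have qq: "q^2 = d^2 + 4*A*C/eta" unfolding q_def using pos by simp
  have q0: "q \<ge> 0" unfolding q_def using pos by simp
  have "d^2 < q^2" using qq A C e by simp
  hence dq: "\<bar>d\<bar> < q" using q0 by (metis abs_le_square_iff abs_of_nonneg not_le)
  define z where "z = (d+q)/(2*A)"
  have zp: "z > 0" unfolding z_def using dq A by (intro divide_pos_pos) auto
  have eq: "eta * A * z^2 - d*eta*z - C = 0"
  proof -
    have "4*A*(eta * A * z^2 - d*eta*z - C) = eta*((2*A*z)^2 - 2*d*(2*A*z)) - 4*A*C"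
      by (simp add: algebra_simps power2_eq_square)
    also have "2*A*z = d+q" unfolding z_def using A by simp
    also have "eta*((d+q)^2 - 2*d*(d+q)) - 4*A*C = eta*(q^2 - d^2) - 4*A*C"
      by (simp add: algebra_simps power2_eq_square)
    also have "\<dots> = 0" using qq e by (simp add: field_simps)
    finally show ?thesis using A by simp
  qed
  have uniq: "w = z" if "0 < w" "eta * A * w^2 - d*eta*w - C = 0" for w
  proof -
    have "(w - z)*(eta*(A*(w+z) - d)) = 0" using eq that(2)
      by (simp add: algebra_simps power2_eq_square)
    moreover have "A*(w+z) - d \<noteq> 0"
    proof
      assume h: "A*(w+z) - d = 0"
      have "eta*A*z^2 - eta*(A*(w+z))*z - C = 0" using eq h by (simp add: algebra_simps)
      hence "-(eta*A*w*z) = C" by (simp add: algebra_simps power2_eq_square)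
      moreover have "eta*A*w*z > 0" using e A that(1) zp by simp
      ultimately show False using C by simp
    qed
    ultimately show ?thesis using e by simp
  qed
  have "(THE z. 0 < z \<and> eta * g1 * ki * z^2 + (g0 - r) * eta * z - gn * kp * mu * r = 0) = z"
  proof (rule the_equality)
    show "0 < z \<and> eta * g1 * ki * z^2 + (g0 - r) * eta * z - gn * kp * mu * r = 0"
      using zp eq by (simp add: A_def C_def d_def algebra_simps)
  next
    fix w assume "0 < w \<and> eta * g1 * ki * w^2 + (g0 - r) * eta * w - gn * kp * mu * r = 0"
    thus "w = z" using uniq by (simp add: A_def C_def d_def algebra_simps)
  qed
  thus ?thesis by (simp add: airc_z1_def z_def A_def C_def d_def q_def)
qed


lemma core:
  fixes g0 g1 gn mu theta ki kp r :: real and z1 z2 :: "real \<Rightarrow> real"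
  assumes g1: "g1 > 0" and gn: "gn > 0"
    and mu: "0 < mu" and th: "0 < theta" and ki: "0 < ki" and kp: "0 < kp"
    and r_def: "r = mu / theta"
    and z1_def: "z1 = (\<lambda>eta. airc_z1 g0 g1 gn ki kp mu r eta)"
    and z2_def: "z2 = (\<lambda>eta. mu / (eta * z1 eta))"
  shows "(r > g0 \<longrightarrow> ((z1 \<longlongrightarrow> (r - g0) / (g1 * ki)) at_top \<and> (z2 \<longlongrightarrow> 0) at_top))
       \<and> (r < g0 \<longrightarrow> ((z1 \<longlongrightarrow> 0) at_top \<and> (z2 \<longlongrightarrow> (g0 - r) / (gn * r * kp)) at_top))
       \<and> (r = g0 \<longrightarrow>
            (\<forall>eta>0. z1 eta = sqrt (gn * kp * mu * r / (eta * g1 * ki))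
                   \<and> z2 eta = sqrt (theta * g1 * ki / (eta * gn * kp))
                   \<and> eta * z1 eta * z2 eta = mu)
            \<and> (z1 \<longlongrightarrow> 0) at_top \<and> (z2 \<longlongrightarrow> 0) at_top)"
proof -
  define a where "a = g1*ki"
  define c where "c = gn*kp*mu*r"
  define d where "d = r - g0"
  define q where "q = (\<lambda>eta::real. sqrt(d^2 + 4*a*c/eta))"
  have r: "r > 0" using mu th r_def by simp
  have a: "a > 0" and c: "c > 0" using g1 ki gn kp mu r by (auto simp: a_def c_def)
  have z1e: "z1 eta = (d + q eta)/(2*a)" if "eta > 0" for eta
    using quad_root[of g1 ki gn kp mu r eta g0] a c that
    by (simp add: z1_def a_def c_def d_def q_def)
  have pos: "0 \<le> d^2 + 4*a*c/eta" if "eta > 0" for eta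
    using a c that by (intro add_nonneg_nonneg) auto
  have qq: "(q eta)^2 = d^2 + 4*a*c/eta" if "eta>0" for eta
    unfolding q_def using pos[OF that] by simp
  have q0: "q eta \<ge> 0" if "eta > 0" for eta unfolding q_def using pos[OF that] by simp
  have dq: "\<bar>d\<bar> < q eta" if "eta > 0" for eta
  proof -
    have "d^2 < (q eta)^2" using qq[OF that] a c that by simp
    thus ?thesis using q0[OF that] by (metis abs_le_square_iff abs_of_nonneg not_le)
  qed
  have z1p: "z1 eta > 0" if "eta > 0" for eta
    unfolding z1e[OF that] using dq[OF that] a by (intro divide_pos_pos) auto
  have z2e: "z2 eta = mu * (q eta - d)/(2*c)" if "eta > 0" for eta
  proof -
    have "(d + q eta)*(q eta - d) = 4*a*c/eta"
      using qq[OF that] by (simp add: algebra_simps power2_eq_square)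
    have "eta * z1 eta * (q eta - d) = eta * ((d + q eta)*(q eta - d)) / (2*a)"
      unfolding z1e[OF that] by simp
    also have "\<dots> = 2*c" unfolding \<open>(d + q eta)*(q eta - d) = 4*a*c/eta\<close>
      using a that by (simp add: field_simps)
    finally have "eta * z1 eta * (q eta - d) = 2*c" .
    moreover have "eta * z1 eta > 0" using z1p[OF that] that by simp
    moreover have "\<And>P x y::real. P*x = y \<Longrightarrow> P > 0 \<Longrightarrow> x = y/P" by (simp add: field_simps)
    ultimately have "q eta - d = 2*c/(eta * z1 eta)" by blast
    thus ?thesis unfolding z2_def using c by simp
  qed
  have ql: "(q \<longlongrightarrow> \<bar>d\<bar>) at_top"
  proof -
    have "((\<lambda>eta::real. 4*a*c/eta) \<longlongrightarrow> 0) at_top"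
      by (intro tendsto_divide_0[OF tendsto_const] filterlim_at_top_imp_at_infinity filterlim_ident)
    hence "((\<lambda>eta. d^2 + 4*a*c/eta) \<longlongrightarrow> d^2 + 0) at_top"
      by (intro tendsto_add tendsto_const)
    hence "(q \<longlongrightarrow> sqrt (d^2 + 0)) at_top" unfolding q_def by (rule tendsto_real_sqrt)
    thus ?thesis by simp
  qed
  have ev: "eventually (\<lambda>eta. (eta::real) > 0) at_top" by (rule eventually_gt_at_top)
  have z1l: "(z1 \<longlongrightarrow> (d + \<bar>d\<bar>)/(2*a)) at_top"
  proof -
    have "((\<lambda>eta. (d + q eta)/(2*a)) \<longlongrightarrow> (d + \<bar>d\<bar>)/(2*a)) at_top"
      by (intro tendsto_divide tendsto_add tendsto_const ql) (use a in auto)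
    thus ?thesis
      by (rule tendsto_cong[THEN iffD1, rotated]) (rule eventually_mono[OF ev], simp add: z1e)
  qed
  have z2l: "(z2 \<longlongrightarrow> mu * (\<bar>d\<bar> - d)/(2*c)) at_top"
  proof -
    have "((\<lambda>eta. mu * (q eta - d)/(2*c)) \<longlongrightarrow> mu * (\<bar>d\<bar> - d)/(2*c)) at_top"
      by (intro tendsto_divide tendsto_mult tendsto_diff tendsto_const ql) (use c in auto)
    thus ?thesis
      by (rule tendsto_cong[THEN iffD1, rotated]) (rule eventually_mono[OF ev], simp add: z2e)
  qed
  have P1: "r > g0 \<longrightarrow> ((z1 \<longlongrightarrow> (r - g0) / (g1 * ki)) at_top \<and> (z2 \<longlongrightarrow> 0) at_top)"
  proof
    assume "r > g0"
    hence "\<bar>d\<bar> = d" "d > 0" by (auto simp: d_def)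
    moreover have "(d + \<bar>d\<bar>)/(2*a) = d/a"
      using \<open>\<bar>d\<bar> = d\<close> a by simp
    moreover have "d/a = (r - g0) / (g1 * ki)" by (simp add: d_def a_def)
    ultimately show "(z1 \<longlongrightarrow> (r - g0) / (g1 * ki)) at_top \<and> (z2 \<longlongrightarrow> 0) at_top"
      using z1l z2l by simp
  qed
  have P2: "r < g0 \<longrightarrow> ((z1 \<longlongrightarrow> 0) at_top \<and> (z2 \<longlongrightarrow> (g0 - r) / (gn * r * kp)) at_top)"
  proof
    assume "r < g0"
    hence dd: "\<bar>d\<bar> = -d" by (auto simp: d_def)
    have "mu * (\<bar>d\<bar> - d)/(2*c) = (g0 - r) / (gn * r * kp)"
    proof -
      have "mu * (\<bar>d\<bar> - d)/(2*c) = mu*(-2*d)/(2*(gn*kp*mu*r))" by (simp add: dd c_def)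
      also have "\<dots> = (g0 - r) / (gn * r * kp)" using mu gn kp r by (simp add: d_def field_simps)
      finally show ?thesis .
    qed
    thus "(z1 \<longlongrightarrow> 0) at_top \<and> (z2 \<longlongrightarrow> (g0 - r) / (gn * r * kp)) at_top"
      using z1l z2l dd by simp
  qed
  have P3: "r = g0 \<longrightarrow>
            (\<forall>eta>0. z1 eta = sqrt (gn * kp * mu * r / (eta * g1 * ki))
                   \<and> z2 eta = sqrt (theta * g1 * ki / (eta * gn * kp))
                   \<and> eta * z1 eta * z2 eta = mu)
            \<and> (z1 \<longlongrightarrow> 0) at_top \<and> (z2 \<longlongrightarrow> 0) at_top"
  proof
    assume rg: "r = g0"
    hence d0: "d = 0" by (simp add: d_def)
    have "\<forall>eta>0. z1 eta = sqrt (gn * kp * mu * r / (eta * g1 * ki))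
                   \<and> z2 eta = sqrt (theta * g1 * ki / (eta * gn * kp))
                   \<and> eta * z1 eta * z2 eta = mu"
    proof (intro allI impI conjI)
      fix eta :: real assume e: "eta > 0"
      have qs: "(q eta)^2 = 4*a*c/eta" using qq[OF e] d0 by simp
      have "sqrt (gn * kp * mu * r / (eta * g1 * ki)) = z1 eta"
      proof (rule real_sqrt_unique)
        show "0 \<le> z1 eta" using z1p[OF e] by simp
        have "(z1 eta)^2 = (q eta)^2/(4*a^2)" using z1e[OF e] d0 by (simp add: power_divide power_mult_distrib)
        also have "\<dots> = c/(eta*a)" using qs a e by (simp add: field_simps power2_eq_square)
        finally show "(z1 eta)^2 = gn * kp * mu * r / (eta * g1 * ki)"
          by (simp add: a_def c_def mult.assoc)
      qed
      thus "z1 eta = sqrt (gn * kp * mu * r / (eta * g1 * ki))" by simp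
      have "sqrt (theta * g1 * ki / (eta * gn * kp)) = z2 eta"
      proof (rule real_sqrt_unique)
        show "0 \<le> z2 eta" using z1p[OF e] e mu unfolding z2_def by simp
        have "(z2 eta)^2 = mu^2 * (q eta)^2/(4*c^2)" using z2e[OF e] d0 by (simp add: power_divide power_mult_distrib)
        also have "\<dots> = mu^2 * a/(eta*c)" using qs c e by (simp add: field_simps power2_eq_square)
        also have "\<dots> = theta * g1 * ki / (eta * gn * kp)"
          unfolding a_def c_def r_def using mu th gn kp e by (simp add: field_simps power2_eq_square)
        finally show "(z2 eta)^2 = theta * g1 * ki / (eta * gn * kp)" .
      qed
      thus "z2 eta = sqrt (theta * g1 * ki / (eta * gn * kp))" by simp
      show "eta * z1 eta * z2 eta = mu" unfolding z2_def using z1p[OF e] e by simp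
    qed
    thus "(\<forall>eta>0. z1 eta = sqrt (gn * kp * mu * r / (eta * g1 * ki))
                   \<and> z2 eta = sqrt (theta * g1 * ki / (eta * gn * kp))
                   \<and> eta * z1 eta * z2 eta = mu)
            \<and> (z1 \<longlongrightarrow> 0) at_top \<and> (z2 \<longlongrightarrow> 0) at_top"
    proof -
      have "(z1 \<longlongrightarrow> 0) at_top" "(z2 \<longlongrightarrow> 0) at_top" using z1l z2l d0 by simp_all
      thus ?thesis using \<open>\<forall>eta>0. _\<close> by blast
    qed
  qed
  show ?thesis using P1 P2 P3 by blast
qed

lemma mv_nth: "(A *v x) $ i = (\<Sum>j\<in>UNIV. A$i$j * x$j)"
  by (simp add: matrix_vector_mult_def)

lemma mv_neg: "A *v (- x) = - (A *v (x::real^'n)) "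
  by (simp add: vec_eq_iff mv_nth sum_negf)

lemma pos_sol:
  fixes A :: "real^'n^'n" and v y :: "real^'n"
  assumes M: "metzler A" and vp: "\<forall>i. v$i > 0" and Av: "\<forall>i. (A *v v)$i < 0"
    and Ay: "\<forall>i. (A *v y)$i \<le> 0"
  shows "y$i \<ge> 0"
proof -
  define t where "t = Min ((\<lambda>j. y$j / v$j) ` UNIV)"
  have tle: "t \<le> y$j / v$j" for j unfolding t_def by (rule Min_le) auto
  have "t \<in> (\<lambda>j. y$j / v$j) ` UNIV" unfolding t_def by (rule Min_in) auto
  then obtain k where tk: "t = y$k / v$k" by auto
  have "t \<ge> 0"
  proof (rule ccontr)
    assume tn: "\<not> t \<ge> 0"
    define u where "u = (\<chi> j. y$j - t * v$j)"
    have u0: "u$j \<ge> 0" for j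
    proof -
      have "t * v$j \<le> y$j" using tle[of j] vp by (simp add: pos_le_divide_eq)
      thus ?thesis by (simp add: u_def)
    qed
    have uk: "u$k = 0" using tk vp[rule_format, of k] by (simp add: u_def)
    have "(A *v u)$k \<ge> 0" unfolding mv_nth
    proof (rule sum_nonneg)
      fix j :: 'n
      show "0 \<le> A$k$j * u$j"
      proof (cases "j = k")
        case True thus ?thesis using uk by simp
      next
        case False thus ?thesis using M u0[of j] unfolding metzler_def by simp
      qed
    qed
    moreover have "(A *v u)$k = (A *v y)$k - t * (A *v v)$k"
      unfolding mv_nth u_def
      by (simp add: right_diff_distrib sum_subtractf sum_distrib_left algebra_simps)
    moreover have "t * (A *v v)$k > 0" using tn Av by (simp add: mult_neg_neg)
    ultimately show False using Ay by (smt (verit))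
  qed
  thus ?thesis using tle[of i] vp by (smt (verit) divide_nonneg_pos divide_less_0_iff)
qed

lemma inv_facts:
  fixes A :: "real^'n^'n" and v :: "real^'n"
  assumes M: "metzler A" and vp: "\<forall>i. v$i > 0" and Av: "\<forall>i. (A *v v)$i < 0"
  shows "\<And>w i. (\<forall>j. w$j \<ge> 0) \<Longrightarrow> - ((matrix_inv A *v w)$i) \<ge> 0"
    and "\<And>k. - ((matrix_inv A *v axis k 1)$k) > 0"
proof -
  have inj: "inj ((*v) A)"
  proof (rule injI)
    fix x y assume e: "A *v x = A *v y"
    hence h: "A *v (x - y) = 0" by (simp add: matrix_vector_mult_diff_distrib)
    from e have h2: "A *v (y - x) = 0" by (simp add: matrix_vector_mult_diff_distrib)
    have "(x-y)$i \<ge> 0" for i by (rule pos_sol[OF M vp Av]) (simp add: h)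
    moreover have "(y-x)$i \<ge> 0" for i by (rule pos_sol[OF M vp Av]) (simp add: h2)
    ultimately have "x$i = y$i" for i by (smt (verit) vector_minus_component)
    thus "x = y" by (simp add: vec_eq_iff)
  qed
  hence "invertible A" using matrix_left_invertible_injective invertible_left_inverse by blast
  hence "A ** matrix_inv A = mat 1" unfolding invertible_def matrix_inv_def by (rule someI_ex[THEN conjunct1])
  hence AI: "A *v (matrix_inv A *v w) = w" for w by (metis matrix_vector_mul_assoc matrix_vector_mul_lid)
  have key: "(- (matrix_inv A *v w))$i \<ge> 0" if "\<forall>j. w$j \<ge> 0" for w i
  proof (rule pos_sol[OF M vp Av])
    show "\<forall>i. (A *v - (matrix_inv A *v w)) $ i \<le> 0" using that
      by (simp add: mv_neg AI) 
  qed
  show "\<And>w i. (\<forall>j. w$j \<ge> 0) \<Longrightarrow> - ((matrix_inv A *v w)$i) \<ge> 0" using key by simp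
  fix k
  define y where "y = - (matrix_inv A *v axis k (1::real))"
  have y0: "y$j \<ge> 0" for j unfolding y_def by (rule key) (simp add: axis_def)
  have "(A *v y)$k = -1" unfolding y_def by (simp add: mv_neg AI axis_def)
  moreover have "(A *v y)$k \<ge> A$k$k * y$k"
  proof -
    have "(A *v y)$k = A$k$k * y$k + (\<Sum>j\<in>UNIV-{k}. A$k$j * y$j)"
      unfolding mv_nth by (simp add: sum.remove)
    moreover have "(\<Sum>j\<in>UNIV-{k}. A$k$j * y$j) \<ge> 0"
      using M y0 unfolding metzler_def by (intro sum_nonneg) auto
    ultimately show ?thesis by simp
  qed
  ultimately have "y$k \<noteq> 0" by auto
  thus "- ((matrix_inv A *v axis k 1)$k) > 0" using y0[of k] unfolding y_def by simp
qed


lemma fp_exists: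
  fixes A :: "real^'n^'n" and e :: real
  assumes M: "metzler A" and e: "e > 0"
  shows "\<exists>x. (\<forall>i. x$i > 0) \<and> sum (($) x) UNIV = 1 \<and>
     (\<forall>i. (\<Sum>j\<in>UNIV. A$i$j * x$j) + e = ((\<Sum>i'\<in>UNIV. \<Sum>j\<in>UNIV. A$i'$j * x$j) + e * real CARD('n)) * x$i)"
proof -
  define S where "S = {x::real^'n. (\<forall>i. 0 \<le> x$i) \<and> sum (($) x) UNIV = 1}"
  define s where "s = (\<Sum>i\<in>UNIV. \<bar>A$i$i\<bar>)"
  define N where "N = (\<lambda>(x::real^'n) i. (\<Sum>j\<in>UNIV. A$i$j * x$j) + s * x$i + e)"
  define sg where "sg = (\<lambda>x. \<Sum>i\<in>UNIV. N x i)"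
  define f where "f = (\<lambda>x. \<chi> i. N x i / sg x)"
  have sii: "\<bar>A$i$i\<bar> \<le> s" for i unfolding s_def
    by (rule member_le_sum) auto
  have Nge: "N x i \<ge> e" if "x \<in> S" for x i
  proof -
    have x0: "\<forall>j. 0 \<le> x$j" using that by (simp add: S_def)
    have "(\<Sum>j\<in>UNIV. A$i$j * x$j) = A$i$i * x$i + (\<Sum>j\<in>UNIV-{i}. A$i$j * x$j)"
      by (simp add: sum.remove)
    moreover have "(\<Sum>j\<in>UNIV-{i}. A$i$j * x$j) \<ge> 0"
      using M x0 unfolding metzler_def by (intro sum_nonneg) auto
    moreover have "(A$i$i + s) * x$i \<ge> 0" using sii[of i] x0 by (intro mult_nonneg_nonneg) auto
    ultimately show ?thesis unfolding N_def by (simp add: algebra_simps)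
  qed
  have sgpos: "sg x > 0" if "x \<in> S" for x
  proof -
    have "sg x \<ge> (\<Sum>i\<in>(UNIV::'n set). e)" unfolding sg_def
      by (rule sum_mono) (rule Nge[OF that])
    moreover have "(\<Sum>i\<in>(UNIV::'n set). e) > 0" using e by simp
    ultimately show ?thesis by simp
  qed
  have Sne: "S \<noteq> {}"
  proof -
    define x0 :: "real^'n" where "x0 = (\<chi> i. 1 / real CARD('n))"
    have "x0 \<in> S" unfolding S_def x0_def by simp
    thus ?thesis by blast
  qed
  have Sclosed: "closed S"
  proof -
    have "S = (\<Inter>i. {x. 0 \<le> x$i}) \<inter> {x. sum (($) x) UNIV = 1}" unfolding S_def by auto
    moreover have "closed {x::real^'n. 0 \<le> x$i}" for i
      by (intro closed_Collect_le continuous_intros)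
    moreover have "closed {x::real^'n. sum (($) x) UNIV = 1}"
      by (intro closed_Collect_eq continuous_intros)
    ultimately show ?thesis by (metis closed_INT closed_Int)
  qed
  have Sbounded: "bounded S"
  proof -
    have "norm x \<le> 1" if "x \<in> S" for x
    proof -
      have "norm x \<le> sum (\<lambda>i. \<bar>x$i\<bar>) UNIV" by (rule norm_le_l1_cart)
      also have "\<dots> = sum (($) x) UNIV" using that by (simp add: S_def)
      finally show ?thesis using that by (simp add: S_def)
    qed
    thus ?thesis unfolding bounded_iff by blast
  qed
  have Scompact: "compact S" using Sclosed Sbounded by (simp add: compact_eq_bounded_closed)
  have Sconvex: "convex S"
    unfolding convex_def S_def
    by (auto simp: sum.distrib sum_distrib_left[symmetric] intro!: add_nonneg_nonneg mult_nonneg_nonneg)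
  have sgne: "\<And>x. x \<in> S \<Longrightarrow> sg x \<noteq> 0" using sgpos by force
  have Nc: "continuous_on S (\<lambda>x. N x i)" for i unfolding N_def by (intro continuous_intros)
  have sgc: "continuous_on S sg" unfolding sg_def by (intro continuous_intros Nc)
  have fcont: "continuous_on S f"
    unfolding f_def by (intro continuous_on_vec_lambda continuous_on_divide Nc sgc) (use sgne in blast)
  have fS: "f \<in> S \<rightarrow> S"
  proof
    fix x assume x: "x \<in> S"
    have "f x $ i \<ge> 0" for i unfolding f_def using Nge[OF x, of i] sgpos[OF x] e by simp
    moreover have "sum (($) (f x)) UNIV = 1"
      unfolding f_def using sgpos[OF x] by (simp add: sum_divide_distrib[symmetric] sg_def)
    ultimately show "f x \<in> S" by (simp add: S_def)
  qed
  obtain x where x: "x \<in> S" and fx: "f x = x"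
    using brouwer[OF Scompact Sconvex Sne fcont fS] by blast
  have Nx: "N x i = sg x * x$i" for i
  proof -
    have "x$i = N x i / sg x" using fx by (metis f_def vec_lambda_beta)
    thus ?thesis using sgpos[OF x] by (simp add: field_simps)
  qed
  have xpos: "x$i > 0" for i
  proof -
    have "N x i > 0" using Nge[OF x, of i] e by simp
    thus ?thesis using Nx[of i] sgpos[OF x] by (simp add: zero_less_mult_iff)
  qed
  have x1: "sum (($) x) UNIV = 1" using x by (simp add: S_def)
  have sgx: "sg x = (\<Sum>i'\<in>UNIV. \<Sum>j\<in>UNIV. A$i'$j * x$j) + s + e * real CARD('n)"
    unfolding sg_def N_def by (simp add: sum.distrib sum_distrib_left[symmetric] x1)
  show ?thesis
  proof (intro exI conjI allI)
    fix i show "x$i > 0" by (rule xpos)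
    show "(\<Sum>j\<in>UNIV. A$i$j * x$j) + e = ((\<Sum>i'\<in>UNIV. \<Sum>j\<in>UNIV. A$i'$j * x$j) + e * real CARD('n)) * x$i"
      using Nx[of i] unfolding sgx N_def by (simp add: algebra_simps)
  qed (rule x1)
qed


lemma simplex_compact: "compact {x::real^'n. (\<forall>i. 0 \<le> x$i) \<and> sum (($) x) UNIV = 1}"
proof -
  define S where "S = {x::real^'n. (\<forall>i. 0 \<le> x$i) \<and> sum (($) x) UNIV = 1}"
  have Sclosed: "closed S"
  proof -
    have "S = (\<Inter>i. {x. 0 \<le> x$i}) \<inter> {x. sum (($) x) UNIV = 1}" unfolding S_def by auto
    moreover have "closed {x::real^'n. 0 \<le> x$i}" for i
      by (intro closed_Collect_le continuous_intros)
    moreover have "closed {x::real^'n. sum (($) x) UNIV = 1}"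
      by (intro closed_Collect_eq continuous_intros)
    ultimately show ?thesis by (metis closed_INT closed_Int)
  qed
  have Sbounded: "bounded S"
  proof -
    have "norm x \<le> 1" if "x \<in> S" for x
    proof -
      have "norm x \<le> sum (\<lambda>i. \<bar>x$i\<bar>) UNIV" by (rule norm_le_l1_cart)
      also have "\<dots> = sum (($) x) UNIV" using that by (simp add: S_def)
      finally show ?thesis using that by (simp add: S_def)
    qed
    thus ?thesis unfolding bounded_iff by blast
  qed
  show ?thesis using Sclosed Sbounded unfolding S_def[symmetric] by (simp add: compact_eq_bounded_closed)
qed

lemma exists_v:
  fixes A :: "real^'n^'n"
  assumes M: "metzler A" and H: "hurwitz A"
  shows "\<exists>v. (\<forall>i. v$i > 0) \<and> (\<forall>i. (A *v v)$i < 0)"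
proof (rule ccontr)
  assume nv: "\<not> ?thesis"
  define G where "G = (\<lambda>x::real^'n. \<Sum>i'\<in>UNIV. \<Sum>j\<in>UNIV. A$i'$j * x$j)"
  define n where "n = real CARD('n)"
  define P where "P = (\<lambda>e (x::real^'n). (\<forall>i. x$i > 0) \<and> sum (($) x) UNIV = 1 \<and>
     (\<forall>i. (\<Sum>j\<in>UNIV. A$i$j * x$j) + e = (G x + e * n) * x$i))"
  have "\<forall>e. \<exists>x. e > 0 \<longrightarrow> P e x"
  proof
    fix e :: real
    show "\<exists>x. e > 0 \<longrightarrow> P e x"
    proof (cases "e > 0")
      case True
      from fp_exists[OF M True] obtain x where
        "(\<forall>i. x$i > 0) \<and> sum (($) x) UNIV = 1 \<and>
         (\<forall>i. (\<Sum>j\<in>UNIV. A$i$j * x$j) + e = ((\<Sum>i'\<in>UNIV. \<Sum>j\<in>UNIV. A$i'$j * x$j) + e * real CARD('n)) * x$i)"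
        by blast
      hence "P e x" unfolding P_def G_def n_def by simp
      thus ?thesis by blast
    qed simp
  qed
  from choice[OF this] obtain X where X0: "\<forall>e. e > 0 \<longrightarrow> P e (X e)" by blast
  have X: "P e (X e)" if "e > 0" for e using X0 that by blast
  have mupos: "G (X e) + e * n > 0" if e: "e > 0" for e
  proof (rule ccontr)
    assume "\<not> G (X e) + e * n > 0"
    hence le: "G (X e) + e * n \<le> 0" by simp
    have "(A *v X e)$i < 0" for i
    proof -
      have "(A *v X e)$i = (G (X e) + e * n) * X e $ i - e"
        using X[OF e] unfolding P_def mv_nth by (simp add: algebra_simps)
      moreover have "(G (X e) + e * n) * X e $ i \<le> 0"
        using le X[OF e] unfolding P_def by (simp add: mult_nonpos_nonneg less_imp_le)
      ultimately show ?thesis using e by simp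
    qed
    moreover have "\<forall>i. X e $ i > 0" using X[OF e] unfolding P_def by simp
    ultimately show False using nv by blast
  qed
  define es where "es = (\<lambda>k::nat. inverse (real (Suc k)))"
  define xs where "xs = (\<lambda>k. X (es k))"
  have esp: "es k > 0" for k unfolding es_def by simp
  have Pk: "P (es k) (xs k)" for k unfolding xs_def by (rule X[OF esp])
  let ?S = "{x::real^'n. (\<forall>i. 0 \<le> x$i) \<and> sum (($) x) UNIV = 1}"
  have inS: "xs k \<in> ?S" for k using Pk[of k] unfolding P_def by (auto intro: less_imp_le)
  have inS': "\<forall>k. xs k \<in> ?S" using inS by blast
  obtain l r where lS: "l \<in> ?S" and r: "strict_mono r" and lim: "(xs \<circ> r) \<longlonglongrightarrow> l"
    by (rule seq_compactE[OF compact_imp_seq_compact[OF simplex_compact] inS'])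
  have esl: "(es \<circ> r) \<longlonglongrightarrow> 0" unfolding es_def
    by (rule LIMSEQ_subseq_LIMSEQ[OF LIMSEQ_inverse_real_of_nat r])
  have compl: "(\<lambda>k. xs (r k) $ j) \<longlonglongrightarrow> l $ j" for j
    using tendsto_vec_nth[OF lim, of j] by (simp add: o_def)
  have esl': "(\<lambda>k. es (r k)) \<longlonglongrightarrow> 0" using esl by (simp add: o_def)
  have Gl: "(\<lambda>k. G (xs (r k)) + es (r k) * n) \<longlonglongrightarrow> G l + 0 * n"
    unfolding G_def by (intro tendsto_intros compl esl')
  have eqk: "(\<Sum>j\<in>UNIV. A$i$j * l$j) = G l * l$i" for i
  proof -
    have L: "(\<lambda>k. (\<Sum>j\<in>UNIV. A$i$j * xs (r k) $ j) + es (r k)) \<longlonglongrightarrow> (\<Sum>j\<in>UNIV. A$i$j * l$j) + 0"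
      by (intro tendsto_intros compl esl')
    have R: "(\<lambda>k. (G (xs (r k)) + es (r k) * n) * xs (r k) $ i) \<longlonglongrightarrow> (G l + 0 * n) * l $ i"
      by (intro tendsto_intros Gl compl)
    have "(\<lambda>k. (\<Sum>j\<in>UNIV. A$i$j * xs (r k) $ j) + es (r k)) = (\<lambda>k. (G (xs (r k)) + es (r k) * n) * xs (r k) $ i)"
      using Pk unfolding P_def by blast
    with L have L': "(\<lambda>k. (G (xs (r k)) + es (r k) * n) * xs (r k) $ i) \<longlonglongrightarrow> (\<Sum>j\<in>UNIV. A$i$j * l$j) + 0"
      by simp
    have "(\<Sum>j\<in>UNIV. A$i$j * l$j) + 0 = (G l + 0 * n) * l $ i"
      by (rule LIMSEQ_unique[OF L' R])
    thus ?thesis by simp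
  qed
  have G0: "G l \<ge> 0"
  proof -
    have "0 \<le> G l + 0 * n"
      by (rule LIMSEQ_le_const[OF Gl]) (auto simp: xs_def intro: less_imp_le[OF mupos[OF esp]])
    thus ?thesis by simp
  qed
  have "sum (($) l) UNIV = 1" using lS by blast
  hence "l \<noteq> 0" by auto
  then obtain i0 where i0: "l $ i0 \<noteq> 0" by (metis vec_eq_iff zero_index)
  define w where "w = (\<chi> i. complex_of_real (l $ i))"
  have "w $ i0 \<noteq> 0" using i0 unfolding w_def by simp
  hence wne: "w \<noteq> 0" by auto
  have "complexify A *v w = complex_of_real (G l) *s w"
  proof (subst vec_eq_iff, intro allI)
    fix i
    have "(complexify A *v w) $ i = (\<Sum>j\<in>UNIV. complex_of_real (A$i$j * l$j))"
      unfolding mv_nth complexify_def w_def by simp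
    also have "\<dots> = complex_of_real (\<Sum>j\<in>UNIV. A$i$j * l$j)" by (simp only: of_real_sum)
    also have "\<dots> = complex_of_real (G l) * w $ i" unfolding eqk w_def by simp
    finally show "(complexify A *v w) $ i = (complex_of_real (G l) *s w) $ i" by simp
  qed
  hence "Re (complex_of_real (G l)) < 0" using H wne unfolding hurwitz_def by blast
  thus False using G0 by simp
qed

theorem mainTheorem2:
  fixes A :: "((real, 'n::{finite,linorder}) vec, 'n) vec" and b0 :: "(real, 'n) vec"
    and mu theta ki kp :: real
    and z1 z2 :: "real \<Rightarrow> real"
  assumes "metzler A" and "hurwitz A"
    and "\<forall>i. 0 \<le> b0 $ i"
    and "0 < mu" and "0 < theta" and "0 < ki" and "0 < kp"
    and "gcoef A (axis first_idx 1) \<noteq> 0"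
  defines "r \<equiv> mu / theta"
    and "g0 \<equiv> gcoef A b0"
    and "g1 \<equiv> gcoef A (axis first_idx 1)"
    and "gn \<equiv> gcoef A (axis last_idx 1)"
  assumes z1_def: "z1 = (\<lambda>eta. airc_z1 g0 g1 gn ki kp mu r eta)"
    and z2_def: "z2 = (\<lambda>eta. mu / (eta * z1 eta))"
  shows "(r > g0 \<longrightarrow> ((z1 \<longlongrightarrow> (r - g0) / (g1 * ki)) at_top \<and> (z2 \<longlongrightarrow> 0) at_top))
       \<and> (r < g0 \<longrightarrow> ((z1 \<longlongrightarrow> 0) at_top \<and> (z2 \<longlongrightarrow> (g0 - r) / (gn * r * kp)) at_top))
       \<and> (r = g0 \<longrightarrow>
            (\<forall>eta>0. z1 eta = sqrt (gn * kp * mu * r / (eta * g1 * ki))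
                   \<and> z2 eta = sqrt (theta * g1 * ki / (eta * gn * kp))
                   \<and> eta * z1 eta * z2 eta = mu)
            \<and> (z1 \<longlongrightarrow> 0) at_top \<and> (z2 \<longlongrightarrow> 0) at_top)"
proof -
  obtain v where vp: "\<forall>i. v$i > 0" and Av: "\<forall>i. (A *v v)$i < 0"
    using exists_v[OF assms(1,2)] by blast
  have "- ((matrix_inv A *v axis first_idx 1)$last_idx) \<ge> 0"
    by (rule inv_facts(1)[OF assms(1) vp Av]) (simp add: axis_def)
  hence "g1 \<ge> 0" unfolding g1_def gcoef_def by simp
  hence g1p: "g1 > 0" using assms(8) unfolding g1_def by simp
  have gnp: "gn > 0" unfolding gn_def gcoef_def using inv_facts(2)[OF assms(1) vp Av] by simp
  show ?thesis
    by (rule core[OF g1p gnp assms(4-7) meta_eq_to_obj_eq[OF r_def] z1_def z2_def])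
qed

end
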